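(* Fix $k\ge1$. Let $\mathcal T_k$ be the set of self-avoiding walks on $\mathbb Z^2$ (including the empty walk) with North, East and South unit steps, starting at $(0,0)$ and confined to the strip $0\le y\le k$. For $w\in\mathcal T_k$ let $h(w)$ (resp. $h_c(w)$) be the number of horizontal steps at height different from $0$ and $k$ (resp. at height $0$ or $k$), let $v(w)$ (resp. $v_c(w)$) be the number of vertical steps ending at height different from $0$ and $k$ (resp. ending at height $0$ or $k$), and let $f(w)$ be the height of the endpoint of $w$. Define $$T_k(s)=\sum_{w\in\mathcal T_k}x^{h(w)}y^{v(w)}a^{h_c(w)}b^{v_c(w)}s^{f(w)}=\sum_{i=0}^kT_{k,i}s^i,$$ where $T_{k,i}$ (a series in $x,y,a,b$) counts walks ending at height $i$, and let $\tilde T_k(s)=T_k(s)-T_{k,0}-s^kT_{k,k}$ (walks not ending at height $0$ or $k$). Then, with $\bar s=1/s$, $$\left(1-\frac x{1-ys}-\frac{xy\bar s}{1-y\bar s}\right)\tilde T_k(s)=\frac{ys-(ys)^k}{1-ys}-\frac{x(ys)^k}{1-ys}\tilde T_k(1/y)-\frac x{1-y\bar s}\tilde T_k(y)+aT_{k,0}\frac{ys-(ys)^k}{1-ys}+aT_{k,k}\frac{ys^{k-1}-y^k}{1-y\bar s},$$ $$T_{k,0}=1+bx\,y^{-1}\tilde T_k(y)+aT_{k,0}+ab\,y^{k-1}T_{k,k},$$ $$T_{k,k}=by^{k-1}+bxy^{k-1}\tilde T_k(1/y)+ab\,y^{k-1}T_{k,0}+aT_{k,k}.$$ *)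

theory Defs
  imports "HOL-Analysis.Analysis"
begin

datatype step = N | E | S

fun move :: "step \<Rightarrow> int \<times> int \<Rightarrow> int \<times> int" where
  "move N (p, q) = (p, q + 1)"
| "move E (p, q) = (p + 1, q)"
| "move S (p, q) = (p, q - 1)"

fun pts :: "int \<times> int \<Rightarrow> step list \<Rightarrow> (int \<times> int) list" where
  "pts p [] = [p]"
| "pts p (st # w) = p # pts (move st p) w"

definition walks :: "nat \<Rightarrow> step list set" where
  "walks k = {w. distinct (pts (0, 0) w) \<and>
                 (\<forall>p \<in> set (pts (0, 0) w). 0 \<le> snd p \<and> snd p \<le> int k)}"

definition steps_at :: "step list \<Rightarrow> (step \<times> (int \<times> int)) list" where
  "steps_at w = zip w (pts (0, 0) w)"

definition boundary :: "nat \<Rightarrow> int \<Rightarrow> bool" where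
  "boundary k q \<longleftrightarrow> q = 0 \<or> q = int k"

definition hstat :: "nat \<Rightarrow> step list \<Rightarrow> nat" where
  "hstat k w = length (filter (\<lambda>(st, p). st = E \<and> \<not> boundary k (snd p)) (steps_at w))"

definition hcstat :: "nat \<Rightarrow> step list \<Rightarrow> nat" where
  "hcstat k w = length (filter (\<lambda>(st, p). st = E \<and> boundary k (snd p)) (steps_at w))"

definition vstat :: "nat \<Rightarrow> step list \<Rightarrow> nat" where
  "vstat k w = length (filter (\<lambda>(st, p). st \<noteq> E \<and> \<not> boundary k (snd (move st p))) (steps_at w))"

definition vcstat :: "nat \<Rightarrow> step list \<Rightarrow> nat" where
  "vcstat k w = length (filter (\<lambda>(st, p). st \<noteq> E \<and> boundary k (snd (move st p))) (steps_at w))"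

definition endh :: "step list \<Rightarrow> int" where
  "endh w = snd (last (pts (0, 0) w))"

definition weight :: "nat \<Rightarrow> complex \<Rightarrow> complex \<Rightarrow> complex \<Rightarrow> complex \<Rightarrow> step list \<Rightarrow> complex" where
  "weight k x y a b w = x ^ hstat k w * y ^ vstat k w * a ^ hcstat k w * b ^ vcstat k w"

definition Tcoef :: "nat \<Rightarrow> complex \<Rightarrow> complex \<Rightarrow> complex \<Rightarrow> complex \<Rightarrow> nat \<Rightarrow> complex" where
  "Tcoef k x y a b i = infsum (weight k x y a b) {w \<in> walks k. endh w = int i}"

definition Ttilde :: "nat \<Rightarrow> complex \<Rightarrow> complex \<Rightarrow> complex \<Rightarrow> complex \<Rightarrow> complex \<Rightarrow> complex" where
  "Ttilde k x y a b s = (\<Sum>i\<in>{1..<k}. Tcoef k x y a b i * s ^ i)"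

end

theory Submission
  imports Defs
begin



definition endp :: "int \<times> int \<Rightarrow> step list \<Rightarrow> int \<times> int" where
  "endp p w = last (pts p w)"

lemma pts_ne[simp]: "pts p w \<noteq> []" by (cases w) auto

lemma endp_Nil[simp]: "endp p [] = p" by (simp add: endp_def)
lemma endp_Cons[simp]: "endp p (st # w) = endp (move st p) w" by (simp add: endp_def)

lemma pts_append: "pts p (u @ v) = butlast (pts p u) @ pts (endp p u) v"
  by (induction u arbitrary: p) auto

lemma endp_append: "endp p (u @ v) = endp (endp p u) v"
  by (induction u arbitrary: p) auto

lemma pts_last: "pts p u = butlast (pts p u) @ [endp p u]"
  by (simp add: endp_def)

lemma fst_move: "fst p \<le> fst (move st p)"
  by (cases st; cases p) auto

lemma fst_pts_le': "\<forall>z \<in> set (pts p w). fst z \<le> fst (endp p w)"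
proof (induction w arbitrary: p)
  case Nil then show ?case by simp
next
  case (Cons st w)
  have "move st p \<in> set (pts (move st p) w)" by (cases w) auto
  then show ?case using Cons.IH[of "move st p"] fst_move[of p st] by force
qed

lemma fst_pts_le: "z \<in> set (pts p w) \<Longrightarrow> fst z \<le> fst (endp p w)"
  using fst_pts_le' by blast

lemma fst_pts_noE': "E \<notin> set w \<Longrightarrow> \<forall>z \<in> set (pts p w). fst z = fst p"
proof (induction w arbitrary: p)
  case Nil then show ?case by simp
next
  case (Cons st w)
  then have "fst (move st p) = fst p" by (cases st; cases p) auto
  with Cons Cons.IH[of "move st p"] show ?case by auto
qed

lemma fst_pts_noE: "E \<notin> set w \<Longrightarrow> z \<in> set (pts p w) \<Longrightarrow> fst z = fst p"
  using fst_pts_noE' by blast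

lemma pts_repN: "pts (q, j) (replicate n N) = map (\<lambda>m. (q, j + int m)) [0..<Suc n]"
proof (induction n arbitrary: j)
  case 0 then show ?case by simp
next
  case (Suc n)
  show ?case using Suc[of "j+1"] by (simp only: replicate_Suc pts.simps move.simps map_upt_Suc) (simp add: algebra_simps)
qed

lemma pts_repS: "pts (q, j) (replicate n S) = map (\<lambda>m. (q, j - int m)) [0..<Suc n]"
proof (induction n arbitrary: j)
  case 0 then show ?case by simp
next
  case (Suc n)
  show ?case using Suc[of "j-1"] by (simp only: replicate_Suc pts.simps move.simps map_upt_Suc) (simp add: algebra_simps)
qed

lemma endp_repN: "endp (q, j) (replicate n N) = (q, j + int n)"
  by (simp add: endp_def pts_repN)
lemma endp_repS: "endp (q, j) (replicate n S) = (q, j - int n)"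
  by (simp add: endp_def pts_repS)

lemma Cons_split_unique:
  "x \<notin> set xs \<Longrightarrow> x \<notin> set xs' \<Longrightarrow> xs @ x # ys = xs' @ x # ys' \<Longrightarrow> xs = xs' \<and> ys = ys'"
  by (induction xs arbitrary: xs') (auto simp: Cons_eq_append_conv)

lemma last_split_unique:
  assumes "E \<notin> set r1" "E \<notin> set r2" "u1 @ E # r1 = u2 @ E # r2"
  shows "u1 = u2 \<and> r1 = r2"
proof -
  have "rev r1 @ E # rev u1 = rev r2 @ E # rev u2" using assms(3)
    by (metis rev.simps(2) rev_append append_assoc append_Cons append_Nil)
  then show ?thesis using Cons_split_unique[of E "rev r1" "rev r2" "rev u1" "rev u2"] assms by auto
qed

lemma all_same:
  "E \<notin> set r \<Longrightarrow> distinct (pts p r) \<Longrightarrow> r = replicate (length r) N \<or> r = replicate (length r) S"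
proof (induction r arbitrary: p)
  case Nil then show ?case by simp
next
  case (Cons st r)
  from Cons.prems have IH: "r = replicate (length r) N \<or> r = replicate (length r) S"
    using Cons.IH[of "move st p"] by auto
  show ?case
  proof (cases r)
    case Nil then show ?thesis using Cons.prems by (cases st) auto
  next
    case (Cons st2 r')
    have "st2 = st"
    proof (rule ccontr)
      assume "st2 \<noteq> st"
      then have "move st2 (move st p) = p" using Cons.prems \<open>r = st2 # r'\<close>
        by (cases st; cases st2; cases p) auto
      then show False using Cons.prems \<open>r = st2 # r'\<close> by (cases r') auto
    qed
    then show ?thesis using IH Cons Cons.prems by (cases st) auto
  qed
qed




definition cnt :: "(step \<times> (int \<times> int) \<Rightarrow> bool) \<Rightarrow> int \<times> int \<Rightarrow> step list \<Rightarrow> nat" where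
  "cnt P p w = length (filter P (zip w (pts p w)))"

lemma cnt_Nil[simp]: "cnt P p [] = 0" by (simp add: cnt_def)
lemma cnt_Cons[simp]: "cnt P p (st # w) = (if P (st, p) then 1 else 0) + cnt P (move st p) w"
  by (simp add: cnt_def)

context fixes k :: nat and x y a b :: complex
begin

definition sw :: "step \<Rightarrow> int \<times> int \<Rightarrow> complex" where
  "sw st p = (if st = E then (if boundary k (snd p) then a else x)
              else (if boundary k (snd (move st p)) then b else y))"

fun wt :: "int \<times> int \<Rightarrow> step list \<Rightarrow> complex" where
  "wt p [] = 1"
| "wt p (st # w) = sw st p * wt (move st p) w"

lemma wt_cnt:
  "x ^ cnt (\<lambda>(st, p). st = E \<and> \<not> boundary k (snd p)) p w
   * y ^ cnt (\<lambda>(st, p). st \<noteq> E \<and> \<not> boundary k (snd (move st p))) p w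
   * a ^ cnt (\<lambda>(st, p). st = E \<and> boundary k (snd p)) p w
   * b ^ cnt (\<lambda>(st, p). st \<noteq> E \<and> boundary k (snd (move st p))) p w = wt p w"
proof (induction w arbitrary: p)
  case Nil then show ?case by simp
next
  case (Cons st w)
  show ?case
    using Cons.IH[of "move st p"]
    by (auto simp: sw_def power_add ac_simps)
qed

lemma weight_wt: "weight k x y a b w = wt (0, 0) w"
  using wt_cnt[of "(0,0)" w]
  by (simp add: weight_def hstat_def vstat_def hcstat_def vcstat_def steps_at_def cnt_def)

lemma wt_append: "wt p (u @ v) = wt p u * wt (endp p u) v"
  by (induction u arbitrary: p) auto

lemma wt_repN: "0 \<le> j \<Longrightarrow> j + int n \<le> int k \<Longrightarrow>
  wt (q, j) (replicate n N) = (if n = 0 then 1 else if j + int n = int k then y ^ (n - 1) * b else y ^ n)"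
proof (induction n arbitrary: j)
  case 0 then show ?case by simp
next
  case (Suc n)
  have IH: "wt (q, j + 1) (replicate n N) = (if n = 0 then 1 else if j + 1 + int n = int k then y ^ (n - 1) * b else y ^ n)"
    using Suc by auto
  show ?case
  proof (cases n)
    case 0 then show ?thesis using Suc.prems by (auto simp: sw_def boundary_def)
  next
    case (Suc m)
    then show ?thesis using IH Suc.prems by (auto simp: sw_def boundary_def)
  qed
qed

lemma wt_repS: "j - int n \<ge> 0 \<Longrightarrow> j \<le> int k \<Longrightarrow>
  wt (q, j) (replicate n S) = (if n = 0 then 1 else if j - int n = 0 then y ^ (n - 1) * b else y ^ n)"
proof (induction n arbitrary: j)
  case 0 then show ?case by simp
next
  case (Suc n)
  have IH: "wt (q, j - 1) (replicate n S) = (if n = 0 then 1 else if j - 1 - int n = 0 then y ^ (n - 1) * b else y ^ n)"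
    using Suc by auto
  show ?case
  proof (cases n)
    case 0 then show ?thesis using Suc.prems by (auto simp: sw_def boundary_def)
  next
    case (Suc m)
    then show ?thesis using IH Suc.prems by (auto simp: sw_def boundary_def)
  qed
qed

end




definition run :: "int \<Rightarrow> int \<Rightarrow> step list" where
  "run j i = (if j \<le> i then replicate (nat (i - j)) N else replicate (nat (j - i)) S)"

lemma run_noE: "E \<notin> set (run j i)" by (simp add: run_def)

lemma endp_run: "endp (q, j) (run j i) = (q, i)"
  by (simp add: run_def endp_repN endp_repS)

lemma distinct_run: "distinct (pts (q, j) (run j i))"
  by (auto simp: run_def pts_repN pts_repS distinct_map inj_on_def)

lemma snd_run: "z \<in> set (pts (q, j) (run j i)) \<Longrightarrow> min i j \<le> snd z \<and> snd z \<le> max i j"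
  by (auto simp: run_def pts_repN pts_repS split: if_splits)

lemma fst_run: "z \<in> set (pts p (run j i)) \<Longrightarrow> fst z = fst p"
  using fst_pts_noE run_noE by blast

lemma endp_in: "endp p w \<in> set (pts p w)"
  by (simp add: endp_def)

lemma endh_endp: "endh w = snd (endp (0, 0) w)"
  by (simp add: endh_def endp_def)

lemma compose:
  assumes u: "u \<in> walks k" and i: "0 \<le> i" "i \<le> int k"
  shows "u @ E # run (endh u) i \<in> walks k \<and> endh (u @ E # run (endh u) i) = i"
proof -
  obtain q j where e: "endp (0,0) u = (q, j)" by fastforce
  have ej: "endh u = j" using e by (simp add: endh_endp)
  have dP: "distinct (pts (0,0) u)" and cP: "\<forall>p\<in>set (pts (0,0) u). 0 \<le> snd p \<and> snd p \<le> int k"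
    using u by (auto simp: walks_def)
  have j: "0 \<le> j" "j \<le> int k" using cP endp_in[of "(0,0)" u] e by force+
  define R where "R = pts (q + 1, j) (run j i)"
  have full: "pts (0,0) (u @ E # run j i) = butlast (pts (0,0) u) @ (q, j) # R"
    by (simp add: pts_append e R_def)
  have fstR: "\<forall>z\<in>set R. fst z = q + 1" using fst_run unfolding R_def by fastforce
  have fstU: "\<forall>z\<in>set (pts (0,0) u). fst z \<le> q" using fst_pts_le[of _ "(0,0)" u] e by force
  have bl: "set (butlast (pts (0,0) u)) \<subseteq> set (pts (0,0) u)" by (meson in_set_butlastD subsetI)
  have qnb: "(q, j) \<notin> set (butlast (pts (0,0) u))"
  proof -
    have "distinct (butlast (pts (0,0) u) @ [endp (0,0) u])" using dP unfolding pts_last[symmetric] .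
    then show ?thesis using e by simp
  qed
  have disj: "\<forall>z\<in>set (butlast (pts (0,0) u)). z \<notin> set R"
  proof
    fix z assume "z \<in> set (butlast (pts (0,0) u))"
    then have "fst z \<le> q" using bl fstU by blast
    then show "z \<notin> set R" using fstR by force
  qed
  have qR: "(q, j) \<notin> set R" using fstR by fastforce
  have "distinct (pts (0,0) (u @ E # run j i))"
    unfolding full using dP qnb disj qR distinct_run[of "q+1" j i]
    by (auto simp: R_def distinct_butlast)
  moreover have "\<forall>p \<in> set (pts (0,0) (u @ E # run j i)). 0 \<le> snd p \<and> snd p \<le> int k"
    unfolding full using cP bl j i snd_run[of _ "q+1" j i] unfolding R_def by fastforce
  moreover have "endh (u @ E # run j i) = i"
    by (simp add: endh_endp endp_append e endp_run)
  ultimately show ?thesis by (simp add: walks_def ej)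
qed

lemma decompose:
  assumes w: "w \<in> walks k"
  shows "w = replicate (nat (endh w)) N \<or> (\<exists>u. u \<in> walks k \<and> w = u @ E # run (endh u) (endh w))"
proof (cases "E \<in> set w")
  case False
  have d: "distinct (pts (0,0) w)" and c: "\<forall>p\<in>set (pts (0,0) w). 0 \<le> snd p \<and> snd p \<le> int k"
    using w by (auto simp: walks_def)
  from all_same[OF False d] show ?thesis
  proof
    assume "w = replicate (length w) N"
    then obtain n where wn: "w = replicate n N" by blast
    show ?thesis by (simp add: wn endh_endp endp_repN)
  next
    assume wS: "w = replicate (length w) S"
    show ?thesis
    proof (cases "length w")
      case 0 then show ?thesis using wS by (simp add: endh_def)
    next
      case (Suc m)
      have wm: "w = replicate (Suc m) S" using wS Suc by simp
      have "(0::int, -1::int) \<in> (\<lambda>m. (0, 0 - int m)) ` set [0..<Suc (Suc m)]"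
        by (rule image_eqI[where x=1]) auto
      then have "(0, -1) \<in> set (pts (0,0) w)" unfolding wm pts_repS by simp
      then show ?thesis using c by force
    qed
  qed
next
  case True
  then obtain u r where wr: "w = u @ E # r" and rE: "E \<notin> set r"
    using split_list_last[OF True] by blast
  obtain q j where e: "endp (0,0) u = (q, j)" by fastforce
  have full: "pts (0,0) w = butlast (pts (0,0) u) @ (q, j) # pts (q+1, j) r"
    by (simp add: wr pts_append e)
  have d: "distinct (pts (0,0) w)" and c: "\<forall>p\<in>set (pts (0,0) w). 0 \<le> snd p \<and> snd p \<le> int k"
    using w by (auto simp: walks_def)
  have uP: "pts (0,0) u = butlast (pts (0,0) u) @ [(q, j)]" using pts_last[of "(0,0)" u] e by simp
  have "u \<in> walks k"
  proof -
    have "distinct (butlast (pts (0,0) u) @ [(q, j)])" using d unfolding full by auto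
    moreover have "set (pts (0,0) u) \<subseteq> set (pts (0,0) w)"
    proof -
      from arg_cong[OF uP, of set] have "set (pts (0,0) u) = insert (q,j) (set (butlast (pts (0,0) u)))" by simp
      then show ?thesis unfolding full by auto
    qed
    ultimately show ?thesis using c uP by (auto simp: walks_def)
  qed
  moreover have "w = u @ E # run (endh u) (endh w)"
  proof -
    have dr: "distinct (pts (q+1, j) r)" using d unfolding full by auto
    have ej: "endh u = j" using e by (simp add: endh_endp)
    from all_same[OF rE dr] show ?thesis
    proof
      assume rN: "r = replicate (length r) N"
      obtain n where rn: "r = replicate n N" using rN by blast
      have "endh w = j + int (length r)"
        by (simp add: rn wr endh_endp endp_append e endp_repN)
      then show ?thesis using rN wr ej by (simp add: run_def)
    next
      assume rS: "r = replicate (length r) S"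
      obtain n where rn: "r = replicate n S" using rS by blast
      have eh: "endh w = j - int (length r)"
        by (simp add: rn wr endh_endp endp_append e endp_repS)
      show ?thesis
      proof (cases "length r = 0")
        case True then show ?thesis using rS wr ej eh by (simp add: run_def)
      next
        case False then show ?thesis using rS wr ej eh by (simp add: run_def)
      qed
    qed
  qed
  ultimately show ?thesis by blast
qed




lemma infsum_UN_finite:
  fixes f :: "'a \<Rightarrow> complex"
  assumes "finite J" "f summable_on A" "\<And>j. j \<in> J \<Longrightarrow> B j \<subseteq> A" "disjoint_family_on B J"
  shows "infsum f (\<Union>j\<in>J. B j) = (\<Sum>j\<in>J. infsum f (B j))"
  using assms
proof (induction J rule: finite_induct)
  case empty then show ?case by simp
next
  case (insert j F)
  have d: "disjoint_family_on B F" using insert.prems(3) by (meson disjoint_family_on_mono subset_insertI)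
  have "B j \<inter> (\<Union>i\<in>F. B i) = {}"
    using insert.prems(3) insert.hyps(2) unfolding disjoint_family_on_def by fastforce
  moreover have "f summable_on B j" using insert.prems summable_on_subset_banach by blast
  moreover have "f summable_on (\<Union>i\<in>F. B i)"
    using insert.prems summable_on_subset_banach[of f A "\<Union>i\<in>F. B i"] by blast
  ultimately have "infsum f (\<Union>i\<in>insert j F. B i) = infsum f (B j) + infsum f (\<Union>i\<in>F. B i)"
    by (simp add: infsum_Un_disjoint)
  then show ?case using insert d by simp
qed

definition Wset :: "nat \<Rightarrow> int \<Rightarrow> step list set" where
  "Wset k i = {w \<in> walks k. endh w = i}"

lemma endh_range: "u \<in> walks k \<Longrightarrow> 0 \<le> endh u \<and> endh u \<le> int k"
  using endp_in[of "(0,0)" u] by (auto simp: walks_def endh_endp)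

lemma repN_walk: "i \<le> k \<Longrightarrow> replicate i N \<in> walks k \<and> endh (replicate i N) = int i"
  by (auto simp: walks_def pts_repN distinct_map inj_on_def endh_endp endp_repN)

lemma set_eq:
  assumes "i \<le> k"
  shows "Wset k (int i) = insert (replicate i N)
     (\<Union>j\<in>{0..k}. (\<lambda>u. u @ E # run (int j) (int i)) ` Wset k (int j))"
proof (rule set_eqI, rule iffI)
  fix w assume "w \<in> Wset k (int i)"
  then have w: "w \<in> walks k" "endh w = int i" by (auto simp: Wset_def)
  from decompose[OF w(1)] show "w \<in> insert (replicate i N)
     (\<Union>j\<in>{0..k}. (\<lambda>u. u @ E # run (int j) (int i)) ` Wset k (int j))"
  proof
    assume wr: "w = replicate (nat (endh w)) N"
    have "w = replicate i N" using wr[unfolded w(2)] by simp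
    then show ?thesis by simp
  next
    assume "\<exists>u. u \<in> walks k \<and> w = u @ E # run (endh u) (endh w)"
    then obtain u where u: "u \<in> walks k" "w = u @ E # run (endh u) (endh w)" by blast
    define j where "j = nat (endh u)"
    have ej: "endh u = int j" "j \<in> {0..k}" using endh_range[OF u(1)] by (auto simp: j_def)
    then have "u \<in> Wset k (int j)" using u by (simp add: Wset_def)
    moreover have "w = u @ E # run (int j) (int i)" using u(2)[unfolded w(2) ej(1)] .
    ultimately have "w \<in> (\<lambda>u. u @ E # run (int j) (int i)) ` Wset k (int j)" by blast
    then show ?thesis using ej(2) by blast
  qed
next
  fix w assume "w \<in> insert (replicate i N)
     (\<Union>j\<in>{0..k}. (\<lambda>u. u @ E # run (int j) (int i)) ` Wset k (int j))"
  then show "w \<in> Wset k (int i)"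
  proof
    assume "w = replicate i N" then show ?thesis using repN_walk[OF assms] by (simp add: Wset_def)
  next
    assume "w \<in> (\<Union>j\<in>{0..k}. (\<lambda>u. u @ E # run (int j) (int i)) ` Wset k (int j))"
    then obtain j u where uj: "u \<in> Wset k (int j)" and wu: "w = u @ E # run (int j) (int i)" by blast
    have "u \<in> walks k" "endh u = int j" using uj by (auto simp: Wset_def)
    then show ?thesis using compose[of u k "int i"] assms unfolding wu Wset_def by simp
  qed
qed

definition rw :: "nat \<Rightarrow> complex \<Rightarrow> complex \<Rightarrow> int \<Rightarrow> int \<Rightarrow> complex" where
  "rw k y b j i = (if i = j then 1 else if boundary k i then y ^ (nat \<bar>i - j\<bar> - 1) * b else y ^ (nat \<bar>i - j\<bar>))"

lemma wt_run:
  assumes "0 \<le> i" "i \<le> int k" "0 \<le> j" "j \<le> int k"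
  shows "wt k x y a b (q, j) (run j i) = rw k y b j i"
proof (cases "j \<le> i")
  case True
  then show ?thesis using wt_repN[of j "nat (i - j)" k x y a b q] assms
    by (auto simp: run_def rw_def boundary_def)
next
  case False
  then show ?thesis using wt_repS[of j "nat (j - i)" k x y a b q] assms
    by (auto simp: run_def rw_def boundary_def)
qed

lemma weight_phi:
  assumes "u \<in> Wset k (int j)" "i \<le> k"
  shows "weight k x y a b (u @ E # run (int j) (int i))
         = weight k x y a b u * ((if boundary k (int j) then a else x) * rw k y b (int j) (int i))"
proof -
  obtain q jj where e: "endp (0,0) u = (q, jj)" by fastforce
  have "jj = int j" using assms e by (simp add: Wset_def endh_endp)
  moreover have "j \<le> k" using assms endh_range[of u k] by (auto simp: Wset_def)
  ultimately have "wt k x y a b (q + 1, jj) (run (int j) (int i)) = rw k y b (int j) (int i)"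
    using assms(2) by (simp only:) (rule wt_run, auto)
  moreover have "weight k x y a b (u @ E # run (int j) (int i))
     = wt k x y a b (0,0) u * (sw k x y a b E (q, jj) * wt k x y a b (q + 1, jj) (run (int j) (int i)))"
    by (simp add: weight_wt wt_append e)
  ultimately show ?thesis using \<open>jj = int j\<close> by (simp add: weight_wt sw_def)
qed




lemma Trec:
  assumes summ: "weight k x y a b summable_on walks k" and i: "i \<le> k"
  shows "Tcoef k x y a b i = wt k x y a b (0,0) (replicate i N)
     + (\<Sum>j\<in>{0..k}. Tcoef k x y a b j * ((if boundary k (int j) then a else x) * rw k y b (int j) (int i)))"
proof -
  let ?f = "weight k x y a b"
  let ?phi = "\<lambda>j u. u @ E # run (int j) (int i)"
  have T: "Tcoef k x y a b j = infsum ?f (Wset k (int j))" for j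
    by (simp add: Tcoef_def Wset_def)
  have sub: "Wset k i' \<subseteq> walks k" for i' by (auto simp: Wset_def)
  have subU: "(\<Union>j\<in>{0..k}. ?phi j ` Wset k (int j)) \<subseteq> walks k"
    using set_eq[OF i] sub by blast
  have notin: "replicate i N \<notin> (\<Union>j\<in>{0..k}. ?phi j ` Wset k (int j))"
  proof
    assume "replicate i N \<in> (\<Union>j\<in>{0..k}. ?phi j ` Wset k (int j))"
    then obtain j u where "replicate i N = u @ E # run (int j) (int i)" by blast
    then have "E \<in> set (replicate i N)" by (metis in_set_conv_decomp)
    then show False by simp
  qed
  have disj: "disjoint_family_on (\<lambda>j. ?phi j ` Wset k (int j)) {0..k}"
  proof (unfold disjoint_family_on_def, intro ballI impI)
    fix j1 j2 assume "j1 \<in> {0..k}" "j2 \<in> {0..k}" "j1 \<noteq> j2"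
    show "?phi j1 ` Wset k (int j1) \<inter> ?phi j2 ` Wset k (int j2) = {}"
    proof (rule ccontr)
      assume "?phi j1 ` Wset k (int j1) \<inter> ?phi j2 ` Wset k (int j2) \<noteq> {}"
      then obtain u1 u2 where "u1 \<in> Wset k (int j1)" "u2 \<in> Wset k (int j2)" "?phi j1 u1 = ?phi j2 u2"
        by blast
      moreover have "u1 = u2" using last_split_unique[OF run_noE run_noE] calculation(3) by blast
      ultimately show False using \<open>j1 \<noteq> j2\<close> by (auto simp: Wset_def)
    qed
  qed
  have e1: "Tcoef k x y a b i = ?f (replicate i N) + infsum ?f (\<Union>j\<in>{0..k}. ?phi j ` Wset k (int j))"
    unfolding T set_eq[OF i]
    by (rule infsum_insert[OF summable_on_subset_banach[OF summ subU] notin])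
  have e2: "infsum ?f (\<Union>j\<in>{0..k}. ?phi j ` Wset k (int j)) = (\<Sum>j\<in>{0..k}. infsum ?f (?phi j ` Wset k (int j)))"
    by (rule infsum_UN_finite[OF _ summ _ disj]) (simp, rule subset_trans[OF UN_upper subU], assumption)
  have e3: "(\<Sum>j\<in>{0..k}. infsum ?f (?phi j ` Wset k (int j))) = (\<Sum>j\<in>{0..k}. Tcoef k x y a b j * ((if boundary k (int j) then a else x) * rw k y b (int j) (int i)))"
  proof (rule sum.cong[OF refl])
    fix j assume "j \<in> {0..k}"
    have inj: "inj_on (?phi j) (Wset k (int j))" by (auto simp: inj_on_def)
    have "infsum ?f (?phi j ` Wset k (int j)) = infsum (?f \<circ> ?phi j) (Wset k (int j))"
      by (rule infsum_reindex[OF inj])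
    also have "\<dots> = infsum (\<lambda>u. ?f u * ((if boundary k (int j) then a else x) * rw k y b (int j) (int i))) (Wset k (int j))"
      by (rule infsum_cong) (simp only: o_apply, rule weight_phi[OF _ i], assumption)
    also have "\<dots> = Tcoef k x y a b j * ((if boundary k (int j) then a else x) * rw k y b (int j) (int i))"
      unfolding T by (rule infsum_cmult_left')
    finally show "infsum ?f (?phi j ` Wset k (int j)) = Tcoef k x y a b j * ((if boundary k (int j) then a else x) * rw k y b (int j) (int i))" .
  qed
  show ?thesis unfolding e1 e2 e3 weight_wt ..
qed




lemma G1: "n \<ge> 1 \<Longrightarrow> (1 - z) * (\<Sum>i\<in>{1..<n}. z ^ i) = z - (z::complex) ^ n"
proof (induction n)
  case 0 then show ?case by simp
next
  case (Suc n)
  show ?case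
  proof (cases "n = 0")
    case True then show ?thesis by simp
  next
    case False
    then have IH: "(1 - z) * (\<Sum>i\<in>{1..<n}. z ^ i) = z - z ^ n" using Suc by simp
    have "(\<Sum>i\<in>{1..<Suc n}. z ^ i) = (\<Sum>i\<in>{1..<n}. z ^ i) + z ^ n"
      using False by (simp add: sum.atLeastLessThan_Suc)
    then have "(1 - z) * (\<Sum>i\<in>{1..<Suc n}. z ^ i) = (1 - z) * (\<Sum>i\<in>{1..<n}. z ^ i) + z ^ n - z * z ^ n"
      by (simp add: algebra_simps)
    then show ?thesis using IH by simp
  qed
qed

lemma G2: assumes "s \<noteq> 0"
  shows "m \<ge> 1 \<Longrightarrow> (1 - y * (1 / s)) * (\<Sum>i\<in>{1..<m}. y ^ (m - i) * s ^ i) = y * s ^ (m - 1) - (y::complex) ^ m"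
proof (induction m)
  case 0 then show ?case by simp
next
  case (Suc m)
  show ?case
  proof (cases "m = 0")
    case True then show ?thesis by simp
  next
    case False
    then have IH: "(1 - y * (1 / s)) * (\<Sum>i\<in>{1..<m}. y ^ (m - i) * s ^ i) = y * s ^ (m - 1) - y ^ m"
      using Suc by simp
    have "(\<Sum>i\<in>{1..<Suc m}. y ^ (Suc m - i) * s ^ i) = (\<Sum>i\<in>{1..<m}. y ^ (Suc m - i) * s ^ i) + y * s ^ m"
      using False by (simp add: sum.atLeastLessThan_Suc)
    also have "(\<Sum>i\<in>{1..<m}. y ^ (Suc m - i) * s ^ i) = y * (\<Sum>i\<in>{1..<m}. y ^ (m - i) * s ^ i)"
      by (simp add: sum_distrib_left Suc_diff_le mult.assoc)
    finally have "(1 - y * (1 / s)) * (\<Sum>i\<in>{1..<Suc m}. y ^ (Suc m - i) * s ^ i)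
       = y * ((1 - y * (1 / s)) * (\<Sum>i\<in>{1..<m}. y ^ (m - i) * s ^ i)) + (1 - y * (1 / s)) * y * s ^ m"
      by (simp add: algebra_simps)
    also have "\<dots> = y * (y * s ^ (m - 1) - y ^ m) + (1 - y * (1 / s)) * y * s ^ m" using IH by simp
    also have "\<dots> = y * s ^ (Suc m - 1) - y ^ Suc m"
    proof -
      obtain m' where m: "m = Suc m'" using False by (cases m) auto
      show ?thesis using assms unfolding m by (simp add: field_simps)
    qed
    finally show ?thesis .
  qed
qed

lemma G3: "j \<le> n \<Longrightarrow> (1 - y * s) * (\<Sum>i\<in>{j..<n}. y ^ (i - j) * s ^ i) = s ^ j - y ^ (n - j) * (s::complex) ^ n"
proof (induction n)
  case 0 then show ?case by simp
next
  case (Suc n)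
  show ?case
  proof (cases "j = Suc n")
    case True then show ?thesis by simp
  next
    case False
    then have jn: "j \<le> n" using Suc by simp
    then have IH: "(1 - y * s) * (\<Sum>i\<in>{j..<n}. y ^ (i - j) * s ^ i) = s ^ j - y ^ (n - j) * s ^ n"
      using Suc by simp
    have "(\<Sum>i\<in>{j..<Suc n}. y ^ (i - j) * s ^ i) = (\<Sum>i\<in>{j..<n}. y ^ (i - j) * s ^ i) + y ^ (n - j) * s ^ n"
      using jn by (simp add: sum.atLeastLessThan_Suc)
    then have "(1 - y * s) * (\<Sum>i\<in>{j..<Suc n}. y ^ (i - j) * s ^ i)
       = (1 - y * s) * (\<Sum>i\<in>{j..<n}. y ^ (i - j) * s ^ i) + y ^ (n - j) * s ^ n - y * y ^ (n - j) * (s * s ^ n)"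
      by (simp add: algebra_simps)
    moreover have "y * y ^ (n - j) = y ^ (Suc n - j)" using jn by (simp add: Suc_diff_le)
    ultimately show ?thesis using IH by simp
  qed
qed




lemma alg0:
  fixes A B1 B2 G Sk T0 Tk Z a c1 c2 w :: complex
  assumes "A = G + T0 * a * G + Tk * a * Sk + (c1 * (A - Z * B1) + c2 * (w * A - B2))"
  shows "A - (c1 * A + c2 * (w * A)) = G + T0 * a * G + Tk * a * Sk - c1 * Z * B1 - c2 * B2"
  using assms by algebra

lemma alg:
  fixes A B1 B2 G Sk P R T0 Tk Z a x y s :: complex
  assumes "1 - y * s \<noteq> 0" "1 - y * (1 / s) \<noteq> 0" "s \<noteq> 0"
    and "(1 - y * s) * G = P" "(1 - y * (1 / s)) * Sk = R"
    and "A = G + T0 * a * G + Tk * a * Sk + (x / (1 - y * s) * (A - Z * B1) + x / (1 - y * (1 / s)) * (y * (1 / s) * A - B2))"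
  shows "(1 - x / (1 - y * s) - x * y * (1 / s) / (1 - y * (1 / s))) * A
     = P / (1 - y * s) - x * Z / (1 - y * s) * B1 - x / (1 - y * (1 / s)) * B2
       + a * T0 * P / (1 - y * s) + a * Tk * R / (1 - y * (1 / s))"
proof -
  have G: "G = P / (1 - y * s)" using assms(1,4) by (simp add: field_simps)
  have S: "Sk = R / (1 - y * (1 / s))" using assms(2,5) by (simp add: field_simps)
  have "(1 - x / (1 - y * s) - x * y * (1 / s) / (1 - y * (1 / s))) * A
      = A - (x / (1 - y * s) * A + x / (1 - y * (1 / s)) * (y * (1 / s) * A))"
    by (simp add: algebra_simps)
  also have "\<dots> = G + T0 * a * G + Tk * a * Sk - x / (1 - y * s) * Z * B1 - x / (1 - y * (1 / s)) * B2"
    by (rule alg0[OF assms(6)])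
  finally show ?thesis unfolding G S by (simp add: algebra_simps)
qed




lemma main_parts:
  fixes k :: nat and x y a b s :: complex
  assumes k: "k \<ge> 1"
    and summ: "weight k x y a b summable_on walks k"
    and y0: "y \<noteq> 0" and s0: "s \<noteq> 0"
  shows "Tcoef k x y a b 0 = 1 + b * x * (1 / y) * Ttilde k x y a b y + a * Tcoef k x y a b 0
           + a * b * y ^ (k - 1) * Tcoef k x y a b k"
    and "Tcoef k x y a b k = b * y ^ (k - 1) + b * x * y ^ (k - 1) * Ttilde k x y a b (1 / y)
           + a * b * y ^ (k - 1) * Tcoef k x y a b 0 + a * Tcoef k x y a b k"
    and "Ttilde k x y a b s = (\<Sum>i\<in>{1..<k}. (y * s) ^ i)
           + Tcoef k x y a b 0 * a * (\<Sum>i\<in>{1..<k}. (y * s) ^ i)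
           + Tcoef k x y a b k * a * (\<Sum>i\<in>{1..<k}. y ^ (k - i) * s ^ i)
           + (\<Sum>j\<in>{1..<k}. Tcoef k x y a b j * x *
                ((\<Sum>i\<in>{1..<j}. y ^ (j - i) * s ^ i) + (\<Sum>i\<in>{j..<k}. y ^ (i - j) * s ^ i)))"
proof -
  let ?T = "Tcoef k x y a b"
  define e where "e j = (if boundary k (int j) then a else x)" for j :: nat
  have rec: "?T i = (if i = 0 then 1 else if int i = int k then y ^ (i - 1) * b else y ^ i)
      + (\<Sum>j\<in>{0..k}. ?T j * (e j * rw k y b (int j) (int i)))" if "i \<le> k" for i
    using Trec[OF summ that] wt_repN[of 0 i k x y a b 0] that unfolding e_def by simp
  have split: "(\<Sum>j\<in>{0..k}. g j) = g 0 + g k + (\<Sum>j\<in>{1..<k}. g j)" for g :: "nat \<Rightarrow> complex"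
  proof -
    have "{0..k} = insert 0 (insert k {1..<k})" using k by auto
    then show ?thesis using k by (simp add: algebra_simps)
  qed
  have e0: "e 0 = a" and ek: "e k = a" by (simp_all add: e_def boundary_def)
  have ei: "e j = x" if "j \<in> {1..<k}" for j using that by (auto simp: e_def boundary_def)
  have int0: "(\<Sum>j\<in>{1..<k}. ?T j * (e j * rw k y b (int j) 0)) = b * x * (1 / y) * Ttilde k x y a b y"
  proof -
    have "(\<Sum>j\<in>{1..<k}. ?T j * (e j * rw k y b (int j) 0)) = (\<Sum>j\<in>{1..<k}. b * x * (1 / y) * (?T j * y ^ j))"
    proof (rule sum.cong[OF refl])
      fix j assume j: "j \<in> {1..<k}"
      then have "y ^ j = y * y ^ (j - 1)" by (metis Suc_diff_1 atLeastLessThan_iff less_le_trans power_Suc zero_less_one)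
      then show "?T j * (e j * rw k y b (int j) 0) = b * x * (1 / y) * (?T j * y ^ j)"
        using j y0 by (simp add: ei rw_def boundary_def nat_diff_distrib)
    qed
    then show ?thesis by (simp add: Ttilde_def sum_distrib_left)
  qed
  show "?T 0 = 1 + b * x * (1 / y) * Ttilde k x y a b y + a * ?T 0 + a * b * y ^ (k - 1) * ?T k"
  proof -
    have "rw k y b (int k) 0 = y ^ (k - 1) * b" using k by (simp add: rw_def boundary_def)
    moreover have "rw k y b 0 0 = 1" by (simp add: rw_def)
    ultimately show ?thesis using rec[of 0] split int0 e0 ek by (simp add: algebra_simps)
  qed
  have intk: "(\<Sum>j\<in>{1..<k}. ?T j * (e j * rw k y b (int j) (int k))) = b * x * y ^ (k - 1) * Ttilde k x y a b (1 / y)"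
  proof -
    have "(\<Sum>j\<in>{1..<k}. ?T j * (e j * rw k y b (int j) (int k))) = (\<Sum>j\<in>{1..<k}. b * x * y ^ (k - 1) * (?T j * (1 / y) ^ j))"
    proof (rule sum.cong[OF refl])
      fix j assume j: "j \<in> {1..<k}"
      then have "y ^ (k - 1) = y ^ (k - j - 1) * y ^ j" by (simp add: power_add[symmetric])
      moreover have "nat \<bar>int k - int j\<bar> = k - j" using j by auto
      ultimately show "?T j * (e j * rw k y b (int j) (int k)) = b * x * y ^ (k - 1) * (?T j * (1 / y) ^ j)"
        using j y0 by (simp add: ei rw_def boundary_def power_one_over field_simps)
    qed
    then show ?thesis by (simp add: Ttilde_def sum_distrib_left)
  qed
  show "?T k = b * y ^ (k - 1) + b * x * y ^ (k - 1) * Ttilde k x y a b (1 / y)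
           + a * b * y ^ (k - 1) * ?T 0 + a * ?T k"
  proof -
    have "rw k y b 0 (int k) = y ^ (k - 1) * b" using k by (simp add: rw_def boundary_def)
    moreover have "rw k y b (int k) (int k) = 1" by (simp add: rw_def)
    ultimately show ?thesis using rec[of k] split intk e0 ek k by (simp add: algebra_simps)
  qed
  have "Ttilde k x y a b s = (\<Sum>i\<in>{1..<k}. (y ^ i + (\<Sum>j\<in>{0..k}. ?T j * (e j * rw k y b (int j) (int i)))) * s ^ i)"
    unfolding Ttilde_def
  proof (rule sum.cong[OF refl])
    fix i assume i: "i \<in> {1..<k}"
    then show "?T i * s ^ i = (y ^ i + (\<Sum>j\<in>{0..k}. ?T j * (e j * rw k y b (int j) (int i)))) * s ^ i"
      using rec[of i] by simp
  qed
  also have "\<dots> = (\<Sum>i\<in>{1..<k}. (y * s) ^ i) + (\<Sum>j\<in>{0..k}. ?T j * e j * (\<Sum>i\<in>{1..<k}. rw k y b (int j) (int i) * s ^ i))"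
    by (simp add: algebra_simps sum.distrib sum_distrib_left sum_distrib_right power_mult_distrib) (rule sum.swap)
  also have "(\<Sum>j\<in>{0..k}. ?T j * e j * (\<Sum>i\<in>{1..<k}. rw k y b (int j) (int i) * s ^ i))
      = ?T 0 * a * (\<Sum>i\<in>{1..<k}. (y * s) ^ i)
           + ?T k * a * (\<Sum>i\<in>{1..<k}. y ^ (k - i) * s ^ i)
           + (\<Sum>j\<in>{1..<k}. ?T j * x *
                ((\<Sum>i\<in>{1..<j}. y ^ (j - i) * s ^ i) + (\<Sum>i\<in>{j..<k}. y ^ (i - j) * s ^ i)))"
  proof -
    have a0: "(\<Sum>i\<in>{1..<k}. rw k y b 0 (int i) * s ^ i) = (\<Sum>i\<in>{1..<k}. (y * s) ^ i)"
      by (rule sum.cong[OF refl]) (auto simp: rw_def boundary_def power_mult_distrib)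
    have ak: "(\<Sum>i\<in>{1..<k}. rw k y b (int k) (int i) * s ^ i) = (\<Sum>i\<in>{1..<k}. y ^ (k - i) * s ^ i)"
    proof (rule sum.cong[OF refl])
      fix i assume "i \<in> {1..<k}"
      moreover have "nat \<bar>int i - int k\<bar> = k - i" using calculation by auto
      ultimately show "rw k y b (int k) (int i) * s ^ i = y ^ (k - i) * s ^ i" by (simp add: rw_def boundary_def)
    qed
    have aj: "(\<Sum>i\<in>{1..<k}. rw k y b (int j) (int i) * s ^ i)
        = (\<Sum>i\<in>{1..<j}. y ^ (j - i) * s ^ i) + (\<Sum>i\<in>{j..<k}. y ^ (i - j) * s ^ i)" if j: "j \<in> {1..<k}" for j
    proof -
      have "(\<Sum>i\<in>{1..<k}. rw k y b (int j) (int i) * s ^ i)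
          = (\<Sum>i\<in>{1..<j}. rw k y b (int j) (int i) * s ^ i) + (\<Sum>i\<in>{j..<k}. rw k y b (int j) (int i) * s ^ i)"
        using j by (simp add: sum.atLeastLessThan_concat)
      moreover have "(\<Sum>i\<in>{1..<j}. rw k y b (int j) (int i) * s ^ i) = (\<Sum>i\<in>{1..<j}. y ^ (j - i) * s ^ i)"
      proof (rule sum.cong[OF refl])
        fix i assume i: "i \<in> {1..<j}"
        then have "nat \<bar>int i - int j\<bar> = j - i" by auto
        then show "rw k y b (int j) (int i) * s ^ i = y ^ (j - i) * s ^ i"
          using i j by (simp add: rw_def boundary_def)
      qed
      moreover have "(\<Sum>i\<in>{j..<k}. rw k y b (int j) (int i) * s ^ i) = (\<Sum>i\<in>{j..<k}. y ^ (i - j) * s ^ i)"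
      proof (rule sum.cong[OF refl])
        fix i assume i: "i \<in> {j..<k}"
        then have "nat \<bar>int i - int j\<bar> = i - j" by auto
        then show "rw k y b (int j) (int i) * s ^ i = y ^ (i - j) * s ^ i"
          using i j by (simp add: rw_def boundary_def)
      qed
      ultimately show ?thesis by simp
    qed
    have "(\<Sum>j\<in>{1..<k}. ?T j * e j * (\<Sum>i\<in>{1..<k}. rw k y b (int j) (int i) * s ^ i))
      = (\<Sum>j\<in>{1..<k}. ?T j * x *
                ((\<Sum>i\<in>{1..<j}. y ^ (j - i) * s ^ i) + (\<Sum>i\<in>{j..<k}. y ^ (i - j) * s ^ i)))"
    proof (rule sum.cong[OF refl])
      fix j assume j: "j \<in> {1..<k}"
      show "?T j * e j * (\<Sum>i\<in>{1..<k}. rw k y b (int j) (int i) * s ^ i) = ?T j * x *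
                ((\<Sum>i\<in>{1..<j}. y ^ (j - i) * s ^ i) + (\<Sum>i\<in>{j..<k}. y ^ (i - j) * s ^ i))"
        by (simp only: aj[OF j] ei[OF j])
    qed
    then show ?thesis unfolding split[of "\<lambda>j. ?T j * e j * (\<Sum>i\<in>{1..<k}. rw k y b (int j) (int i) * s ^ i)"]
      using a0 ak e0 ek by simp
  qed
  finally show "Ttilde k x y a b s = (\<Sum>i\<in>{1..<k}. (y * s) ^ i)
           + ?T 0 * a * (\<Sum>i\<in>{1..<k}. (y * s) ^ i)
           + ?T k * a * (\<Sum>i\<in>{1..<k}. y ^ (k - i) * s ^ i)
           + (\<Sum>j\<in>{1..<k}. ?T j * x *
                ((\<Sum>i\<in>{1..<j}. y ^ (j - i) * s ^ i) + (\<Sum>i\<in>{j..<k}. y ^ (i - j) * s ^ i)))"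
    by (simp add: algebra_simps)
qed




theorem lemma2p3:
  fixes k :: nat and x y a b s :: complex
  assumes "k \<ge> 1"
    and "weight k x y a b summable_on walks k"
    and "y \<noteq> 0" and "s \<noteq> 0" and "1 - y * s \<noteq> 0" and "1 - y * (1 / s) \<noteq> 0"
  shows "((1 - x / (1 - y * s) - x * y * (1 / s) / (1 - y * (1 / s))) * Ttilde k x y a b s
           = (y * s - (y * s) ^ k) / (1 - y * s)
             - x * (y * s) ^ k / (1 - y * s) * Ttilde k x y a b (1 / y)
             - x / (1 - y * (1 / s)) * Ttilde k x y a b y
             + a * Tcoef k x y a b 0 * (y * s - (y * s) ^ k) / (1 - y * s)
             + a * Tcoef k x y a b k * (y * s ^ (k - 1) - y ^ k) / (1 - y * (1 / s))) \<and>
         (Tcoef k x y a b 0 = 1 + b * x * (1 / y) * Ttilde k x y a b y + a * Tcoef k x y a b 0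
           + a * b * y ^ (k - 1) * Tcoef k x y a b k) \<and>
         (Tcoef k x y a b k = b * y ^ (k - 1) + b * x * y ^ (k - 1) * Ttilde k x y a b (1 / y)
           + a * b * y ^ (k - 1) * Tcoef k x y a b 0 + a * Tcoef k x y a b k)"
proof -
  note parts = main_parts[OF assms(1,2,3,4)]
  let ?T = "Tcoef k x y a b"
  let ?D1 = "1 - y * s" and ?D2 = "1 - y * (1 / s)"
  have sumeq: "(\<Sum>j\<in>{1..<k}. ?T j * x *
                ((\<Sum>i\<in>{1..<j}. y ^ (j - i) * s ^ i) + (\<Sum>i\<in>{j..<k}. y ^ (i - j) * s ^ i)))
      = x / ?D1 * (Ttilde k x y a b s - (y * s) ^ k * Ttilde k x y a b (1 / y))
        + x / ?D2 * (y * (1 / s) * Ttilde k x y a b s - Ttilde k x y a b y)"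
  proof -
    have "(\<Sum>j\<in>{1..<k}. ?T j * x *
                ((\<Sum>i\<in>{1..<j}. y ^ (j - i) * s ^ i) + (\<Sum>i\<in>{j..<k}. y ^ (i - j) * s ^ i)))
        = (\<Sum>j\<in>{1..<k}. x / ?D1 * (?T j * s ^ j) - x / ?D1 * (y * s) ^ k * (?T j * (1 / y) ^ j)
            + x / ?D2 * (y * (1 / s)) * (?T j * s ^ j) - x / ?D2 * (?T j * y ^ j))"
    proof (rule sum.cong[OF refl])
      fix j assume j: "j \<in> {1..<k}"
      have q1: "(\<Sum>i\<in>{1..<j}. y ^ (j - i) * s ^ i) = (y * (1 / s) * s ^ j - y ^ j) / ?D2"
      proof -
        have "?D2 * (\<Sum>i\<in>{1..<j}. y ^ (j - i) * s ^ i) = y * s ^ (j - 1) - y ^ j"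
          using G2[OF assms(4), of j y] j by simp
        moreover have "y * s ^ (j - 1) = y * (1 / s) * s ^ j"
          using j assms(4) by (cases j) (auto simp: field_simps)
        ultimately show ?thesis using assms(6) by (simp add: field_simps)
      qed
      have q2: "(\<Sum>i\<in>{j..<k}. y ^ (i - j) * s ^ i) = (s ^ j - (y * s) ^ k * (1 / y) ^ j) / ?D1"
      proof -
        have "?D1 * (\<Sum>i\<in>{j..<k}. y ^ (i - j) * s ^ i) = s ^ j - y ^ (k - j) * s ^ k"
          using G3[of j k y s] j by simp
        moreover have "y ^ (k - j) * s ^ k = (y * s) ^ k * (1 / y) ^ j"
        proof -
          have "y ^ k = y ^ (k - j) * y ^ j" using j by (simp add: power_add[symmetric])
          then show ?thesis using assms(3) by (simp add: power_mult_distrib power_one_over field_simps)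
        qed
        ultimately show ?thesis using assms(5) by (simp add: field_simps)
      qed
      show "?T j * x * ((\<Sum>i\<in>{1..<j}. y ^ (j - i) * s ^ i) + (\<Sum>i\<in>{j..<k}. y ^ (i - j) * s ^ i))
          = x / ?D1 * (?T j * s ^ j) - x / ?D1 * (y * s) ^ k * (?T j * (1 / y) ^ j)
            + x / ?D2 * (y * (1 / s)) * (?T j * s ^ j) - x / ?D2 * (?T j * y ^ j)"
        unfolding q1 q2 by (simp add: algebra_simps add_divide_distrib diff_divide_distrib)
    qed
    also have "\<dots> = x / ?D1 * (\<Sum>j\<in>{1..<k}. ?T j * s ^ j) - x / ?D1 * (y * s) ^ k * (\<Sum>j\<in>{1..<k}. ?T j * (1 / y) ^ j)
            + x / ?D2 * (y * (1 / s)) * (\<Sum>j\<in>{1..<k}. ?T j * s ^ j) - x / ?D2 * (\<Sum>j\<in>{1..<k}. ?T j * y ^ j)"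
      by (simp add: sum.distrib sum_subtractf sum_distrib_left)
    finally show ?thesis unfolding Ttilde_def by (simp add: algebra_simps)
  qed
  have P: "?D1 * (\<Sum>i\<in>{1..<k}. (y * s) ^ i) = y * s - (y * s) ^ k" using G1[OF assms(1)] .
  have R: "?D2 * (\<Sum>i\<in>{1..<k}. y ^ (k - i) * s ^ i) = y * s ^ (k - 1) - y ^ k" using G2[OF assms(4) assms(1)] .
  have A: "Ttilde k x y a b s = (\<Sum>i\<in>{1..<k}. (y * s) ^ i) + ?T 0 * a * (\<Sum>i\<in>{1..<k}. (y * s) ^ i)
      + ?T k * a * (\<Sum>i\<in>{1..<k}. y ^ (k - i) * s ^ i)
      + (x / ?D1 * (Ttilde k x y a b s - (y * s) ^ k * Ttilde k x y a b (1 / y))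
        + x / ?D2 * (y * (1 / s) * Ttilde k x y a b s - Ttilde k x y a b y))"
    using parts(3) unfolding sumeq .
  show ?thesis
    using alg[OF assms(5,6,4) P R A] parts(1,2) by simp
qed


end
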